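(* Let $q$ be a prime power and let $\{P_i\}$ be a sequence of integral convex polytopes with $P_i\subseteq[0,q-2]^{n_i}$ (for instance an infinite family of toric codes over $\mathbb{F}_q$). Then the sequence $\{M(P_i)\}$ is unbounded if and only if the sequence $\{L(P_i)\}$ is unbounded.
   Context: $M(P)$ denotes the largest integer $i\ge0$ such that there is a unimodular affine transformation $A$ (a map $x\mapsto Mx+\lambda$ with $M\in GL(n,\mathbb{Z})$, $\lambda\in\mathbb{Z}^n$) with $A([0,1]^i\times\{0\}^{n-i})\subseteq P$. The Minkowski sum of $P,Q\subseteq\mathbb{R}^n$ is $P+Q=\{p+y:p\in P,y\in Q\}$. For an integral convex polytope $P$, its Minkowski length $\ell(P)$ is the largest number of summands in a decomposition $P=P_1+\dots+P_\ell$ into lattice polytopes $P_j$ of positive dimension ($\ell(P)=0$ if $P$ is a point). The full Minkowski length is $L(P)=\max\{\ell(Q): Q\subseteq P \text{ a lattice polytope}\}$. *)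

theory Defs
  imports Complex_Main "HOL-Computational_Algebra.Primes"
begin

text \<open>Points of R^n are modelled as functions nat => real vanishing at coordinates >= n.\<close>

definition in_lattice :: "nat \<Rightarrow> (nat \<Rightarrow> real) \<Rightarrow> bool" where
  "in_lattice n x \<longleftrightarrow> (\<forall>j. x j \<in> \<int>) \<and> (\<forall>j\<ge>n. x j = 0)"

definition conv_fin :: "(nat \<Rightarrow> real) set \<Rightarrow> (nat \<Rightarrow> real) set" where
  "conv_fin S = {x. \<exists>u. (\<forall>y\<in>S. 0 \<le> u y) \<and> (\<Sum>y\<in>S. u y) = 1 \<and>
                       x = (\<lambda>k. \<Sum>y\<in>S. u y * y k)}"

definition lattice_polytope :: "nat \<Rightarrow> (nat \<Rightarrow> real) set \<Rightarrow> bool" where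
  "lattice_polytope n P \<longleftrightarrow>
     (\<exists>S. finite S \<and> S \<noteq> {} \<and> (\<forall>x\<in>S. in_lattice n x) \<and> P = conv_fin S)"

definition msum :: "(nat \<Rightarrow> real) set \<Rightarrow> (nat \<Rightarrow> real) set \<Rightarrow> (nat \<Rightarrow> real) set" where
  "msum P Q = {(\<lambda>k. p k + y k) | p y. p \<in> P \<and> y \<in> Q}"

definition msum_list :: "(nat \<Rightarrow> real) set list \<Rightarrow> (nat \<Rightarrow> real) set" where
  "msum_list Ps = foldr msum Ps {(\<lambda>k. 0)}"

definition pos_dim :: "(nat \<Rightarrow> real) set \<Rightarrow> bool" where
  "pos_dim P \<longleftrightarrow> (\<exists>x\<in>P. \<exists>y\<in>P. x \<noteq> y)"

definition mink_length :: "nat \<Rightarrow> (nat \<Rightarrow> real) set \<Rightarrow> nat" where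
  "mink_length n P = (GREATEST l. l = 0 \<or>
     (\<exists>Ps. length Ps = l \<and> (\<forall>Q\<in>set Ps. lattice_polytope n Q \<and> pos_dim Q) \<and> P = msum_list Ps))"

definition full_mink_length :: "nat \<Rightarrow> (nat \<Rightarrow> real) set \<Rightarrow> nat" where
  "full_mink_length n P = (GREATEST k. \<exists>Q. lattice_polytope n Q \<and> Q \<subseteq> P \<and> k = mink_length n Q)"

definition unimodular :: "nat \<Rightarrow> (nat \<Rightarrow> nat \<Rightarrow> int) \<Rightarrow> bool" where
  "unimodular n M \<longleftrightarrow> (\<exists>N. \<forall>a<n. \<forall>b<n.
      (\<Sum>c<n. M a c * N c b) = (if a = b then 1 else 0) \<and>
      (\<Sum>c<n. N a c * M c b) = (if a = b then 1 else 0))"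

definition aff_map :: "nat \<Rightarrow> (nat \<Rightarrow> nat \<Rightarrow> int) \<Rightarrow> (nat \<Rightarrow> int) \<Rightarrow> (nat \<Rightarrow> real) \<Rightarrow> (nat \<Rightarrow> real)" where
  "aff_map n M lam x = (\<lambda>k. if k < n then of_int (lam k) + (\<Sum>j<n. of_int (M k j) * x j) else 0)"

definition unit_cube :: "nat \<Rightarrow> (nat \<Rightarrow> real) set" where
  "unit_cube i = {x. (\<forall>j<i. 0 \<le> x j \<and> x j \<le> 1) \<and> (\<forall>j\<ge>i. x j = 0)}"

definition cube_number :: "nat \<Rightarrow> (nat \<Rightarrow> real) set \<Rightarrow> nat" where
  "cube_number n P = (GREATEST i. i \<le> n \<and> (\<exists>M lam. unimodular n M \<and> (\<forall>k\<ge>n. lam k = 0) \<and>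
        aff_map n M lam ` unit_cube i \<subseteq> P))"

end

theory Submission
  imports Defs
begin

type_synonym imat = "nat \<Rightarrow> nat \<Rightarrow> int"

definition idm :: imat where "idm a b = (if a = b then 1 else 0)"
definition mmul :: "nat \<Rightarrow> imat \<Rightarrow> imat \<Rightarrow> imat" where
  "mmul n A B = (\<lambda>a b. \<Sum>c<n. A a c * B c b)"
definition mv :: "nat \<Rightarrow> imat \<Rightarrow> (nat \<Rightarrow> int) \<Rightarrow> nat \<Rightarrow> int" where
  "mv n A x = (\<lambda>a. if a < n then \<Sum>b<n. A a b * x b else 0)"
definition uni :: "nat \<Rightarrow> imat \<Rightarrow> imat \<Rightarrow> bool" where
  "uni n U V \<longleftrightarrow> (\<forall>a<n. \<forall>b<n. mmul n U V a b = idm a b \<and> mmul n V U a b = idm a b)"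
definition sv :: "nat \<Rightarrow> (nat \<Rightarrow> int) \<Rightarrow> bool" where
  "sv n x \<longleftrightarrow> (\<forall>k\<ge>n. x k = 0)"

lemma ifz_mult[simp]: "(if P then u else 0) * (y::int) = (if P then u*y else 0)" by simp
lemma mult_ifz[simp]: "(y::int) * (if P then u else 0) = (if P then y*u else 0)" by simp

lemma mv_mmul: "mv n (mmul n A B) x = mv n A (mv n B x)"
proof
  fix a
  show "mv n (mmul n A B) x a = mv n A (mv n B x) a"
  proof (cases "a < n")
    case True
    have "(\<Sum>c<n. (\<Sum>b<n. A a b * B b c) * x c) = (\<Sum>b<n. A a b * (\<Sum>c<n. B b c * x c))"
    proof -
      have "(\<Sum>c<n. (\<Sum>b<n. A a b * B b c) * x c) = (\<Sum>c<n. \<Sum>b<n. A a b * (B b c * x c))"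
        by (simp add: sum_distrib_right mult.assoc)
      also have "\<dots> = (\<Sum>b<n. \<Sum>c<n. A a b * (B b c * x c))" by (rule sum.swap)
      also have "\<dots> = (\<Sum>b<n. A a b * (\<Sum>c<n. B b c * x c))" by (simp add: sum_distrib_left)
      finally show ?thesis .
    qed
    then show ?thesis using True by (simp add: mv_def mmul_def)
  qed (simp add: mv_def)
qed

lemma mmul_assoc: "mmul n (mmul n A B) C = mmul n A (mmul n B C)"
  unfolding mmul_def
  by (auto simp: sum_distrib_left sum_distrib_right mult.assoc intro!: ext sum.swap)

lemma mmul_cong:
  assumes "\<And>a b. a < n \<Longrightarrow> b < n \<Longrightarrow> A a b = A' a b"
    and "\<And>a b. a < n \<Longrightarrow> b < n \<Longrightarrow> B a b = B' a b"
    and "a < n" "b < n"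
  shows "mmul n A B a b = mmul n A' B' a b"
  unfolding mmul_def using assms by (auto intro!: sum.cong)

lemma mmul_idm_right: "b < n \<Longrightarrow> mmul n A idm a b = A a b"
  by (simp add: mmul_def idm_def sum.delta')
lemma mmul_idm_left: "a < n \<Longrightarrow> mmul n idm A a b = A a b"
  by (simp add: mmul_def idm_def sum.delta)

lemma uni_idm: "uni n idm idm"
  by (simp add: uni_def mmul_idm_left)

lemma uni_sym: "uni n U V \<Longrightarrow> uni n V U"
  by (simp add: uni_def)

lemma uni_mmul:
  assumes "uni n U V" "uni n U2 V2"
  shows "uni n (mmul n U2 U) (mmul n V V2)"
proof -
  have 1: "mmul n (mmul n U2 U) (mmul n V V2) a b = idm a b" if "a < n" "b < n" for a b
  proof -
    have "mmul n (mmul n U2 U) (mmul n V V2) a b = mmul n U2 (mmul n (mmul n U V) V2) a b"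
      by (simp add: mmul_assoc)
    also have "\<dots> = mmul n U2 (mmul n idm V2) a b"
      by (rule mmul_cong) (use assms that in \<open>auto intro!: mmul_cong simp: uni_def\<close>)
    also have "\<dots> = mmul n U2 V2 a b"
      by (rule mmul_cong) (use that in \<open>auto simp: mmul_idm_left\<close>)
    finally show ?thesis using assms that by (simp add: uni_def)
  qed
  have 2: "mmul n (mmul n V V2) (mmul n U2 U) a b = idm a b" if "a < n" "b < n" for a b
  proof -
    have "mmul n (mmul n V V2) (mmul n U2 U) a b = mmul n V (mmul n (mmul n V2 U2) U) a b"
      by (simp add: mmul_assoc)
    also have "\<dots> = mmul n V (mmul n idm U) a b"
      by (rule mmul_cong) (use assms that in \<open>auto intro!: mmul_cong simp: uni_def\<close>)
    also have "\<dots> = mmul n V U a b"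
      by (rule mmul_cong) (use that in \<open>auto simp: mmul_idm_left\<close>)
    finally show ?thesis using assms that by (simp add: uni_def)
  qed
  show ?thesis using 1 2 by (simp add: uni_def)
qed

lemma mv_idm: "sv n x \<Longrightarrow> mv n idm x = x"
  by (auto simp: mv_def idm_def sv_def)

lemma mv_cong: "(\<And>a b. a < n \<Longrightarrow> b < n \<Longrightarrow> A a b = A' a b) \<Longrightarrow> mv n A x = mv n A' x"
  by (auto simp: mv_def intro!: sum.cong)

lemma uni_inv: "uni n U V \<Longrightarrow> sv n x \<Longrightarrow> mv n V (mv n U x) = x"
proof -
  assume u: "uni n U V" and x: "sv n x"
  have "mv n V (mv n U x) = mv n (mmul n V U) x" by (simp add: mv_mmul)
  also have "\<dots> = mv n idm x" by (rule mv_cong) (use u in \<open>simp add: uni_def\<close>)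
  finally show ?thesis using x mv_idm by simp
qed

lemma sv_mv: "sv n (mv n A x)" by (simp add: sv_def mv_def)

definition tv :: "nat \<Rightarrow> nat \<Rightarrow> (nat \<Rightarrow> int) \<Rightarrow> imat" where
  "tv n k r = (\<lambda>a b. idm a b + (if b = k then r a else 0))"

lemma mv_tv:
  assumes "k < n" "sv n x" "sv n r"
  shows "mv n (tv n k r) x = (\<lambda>a. x a + x k * r a)"
proof
  fix a show "mv n (tv n k r) x a = x a + x k * r a"
  proof (cases "a < n")
    case True
    have "(\<Sum>b<n. (idm a b + (if b = k then r a else 0)) * x b)
        = (\<Sum>b<n. (if a = b then x b else 0)) + (\<Sum>b<n. (if b = k then r a * x b else 0))"
      by (simp add: idm_def distrib_right sum.distrib)
    also have "\<dots> = x a + x k * r a" using True assms(1) by (simp add: sum.delta sum.delta')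
    finally show ?thesis using True by (simp add: mv_def tv_def)
  next
    case False then show ?thesis using assms by (simp add: mv_def sv_def)
  qed
qed

lemma uni_tv_aux:
  assumes "k < n" "r k = 0" "s k = 0" "\<And>a. r a + s a = 0" "a < n" "b < n"
  shows "mmul n (tv n k r) (tv n k s) a b = idm a b"
proof -
  have "mmul n (tv n k r) (tv n k s) a b =
     (\<Sum>c<n. (if a = c then idm c b else 0) + (if c = k then r a * idm c b else 0)
        + ((if a = c then (if b = k then s c else 0) else 0) + (if c = k then (if b = k then r a * s c else 0) else 0)))"
    unfolding mmul_def tv_def by (rule sum.cong) (auto simp: idm_def algebra_simps)
  also have "\<dots> = idm a b + r a * idm k b + ((if b = k then s a else 0) + (if b = k then r a * s k else 0))"
    using assms by (simp add: sum.distrib sum.delta sum.delta')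
  also have "\<dots> = idm a b" using assms by (cases "b = k") (auto simp: idm_def)
  finally show ?thesis .
qed

lemma uni_tv:
  assumes "k < n" "r k = 0"
  shows "uni n (tv n k r) (tv n k (\<lambda>a. - r a))"
  unfolding uni_def
proof (intro allI impI conjI)
  fix a b assume ab: "a < n" "b < n"
  show "mmul n (tv n k r) (tv n k (\<lambda>a. - r a)) a b = idm a b"
    by (rule uni_tv_aux) (use assms ab in auto)
  show "mmul n (tv n k (\<lambda>a. - r a)) (tv n k r) a b = idm a b"
    by (rule uni_tv_aux) (use assms ab in auto)
qed

definition fl :: "nat \<Rightarrow> imat" where
  "fl k = (\<lambda>a b. if a = b then (if a = k then -1 else 1) else 0)"

lemma fl_fl: assumes "a < n" shows "mmul n (fl k) (fl k) a b = idm a b"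
proof -
  have "mmul n (fl k) (fl k) a b = (\<Sum>c<n. if c = a then (if a = k then -1 else 1) * fl k c b else 0)"
    unfolding mmul_def by (rule sum.cong) (auto simp: fl_def)
  also have "\<dots> = (if a = k then -1 else 1) * fl k a b" using assms by (simp only: sum.delta finite_lessThan) simp
  also have "\<dots> = idm a b" by (auto simp: fl_def idm_def)
  finally show ?thesis .
qed

lemma uni_fl: "uni n (fl k) (fl k)"
  by (simp add: uni_def fl_fl)

lemma mv_fl: assumes "k < n" "sv n x" shows "mv n (fl k) x = x(k := - x k)"
proof
  fix a show "mv n (fl k) x a = (x(k := - x k)) a"
  proof (cases "a < n")
    case True
    have "(\<Sum>b<n. fl k a b * x b) = (\<Sum>b<n. if b = a then (if a = k then -1 else 1) * x b else 0)"
      by (rule sum.cong) (auto simp: fl_def)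
    also have "\<dots> = (if a = k then -1 else 1) * x a" using True by (simp only: sum.delta finite_lessThan) simp
    finally show ?thesis using True by (simp add: mv_def)
  next
    case False then show ?thesis using assms by (auto simp: mv_def sv_def)
  qed
qed

definition tr :: "nat \<Rightarrow> nat \<Rightarrow> nat \<Rightarrow> nat" where
  "tr k m a = (if a = k then m else if a = m then k else a)"
definition sw :: "nat \<Rightarrow> nat \<Rightarrow> imat" where
  "sw k m = (\<lambda>a b. if b = tr k m a then 1 else 0)"

lemma tr_lt: "k < n \<Longrightarrow> m < n \<Longrightarrow> a < n \<Longrightarrow> tr k m a < n" by (simp add: tr_def)
lemma tr_tr: "tr k m (tr k m a) = a" by (simp add: tr_def)

lemma mv_sw: assumes "k < n" "m < n" "sv n x" shows "mv n (sw k m) x = (\<lambda>a. x (tr k m a))"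
proof
  fix a show "mv n (sw k m) x a = x (tr k m a)"
  proof (cases "a < n")
    case True then show ?thesis
      using assms tr_lt[OF assms(1,2), of a] by (auto simp: mv_def sw_def sv_def)
  next
    case False then show ?thesis using assms by (auto simp: mv_def sv_def tr_def)
  qed
qed

lemma uni_sw: assumes "k < n" "m < n" shows "uni n (sw k m) (sw k m)"
proof -
  have "mmul n (sw k m) (sw k m) a b = idm a b" if "a < n" "b < n" for a b
  proof -
    have "mmul n (sw k m) (sw k m) a b = (\<Sum>c<n. if c = tr k m a then (if b = tr k m c then 1 else 0) else 0)"
      unfolding mmul_def sw_def by (rule sum.cong) auto
    also have "\<dots> = (if b = tr k m (tr k m a) then 1 else 0)"
      using tr_lt[OF assms that(1)] by (simp only: sum.delta finite_lessThan) simp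
    finally show ?thesis by (simp add: tr_tr idm_def)
  qed
  then show ?thesis by (simp add: uni_def)
qed

lemma euclid_step_abs:
  fixes xa xb :: int
  assumes "xa \<noteq> 0" "xb \<noteq> 0" "\<bar>xb\<bar> \<le> \<bar>xa\<bar>"
  shows "\<bar>xa + xb * (- (sgn xa * sgn xb))\<bar> < \<bar>xa\<bar>"
  using assms by (cases "xa > 0"; cases "xb > 0") (simp_all add: sgn_if abs_if)

lemma euclid:
  assumes "finite K" "K \<subseteq> {..<n}" "sv n x" "\<exists>b\<in>K. x b \<noteq> 0"
  shows "\<exists>E E' k v. uni n E E' \<and> k \<in> K \<and> v \<noteq> 0 \<and>
     (\<forall>y. sv n y \<longrightarrow> (\<forall>b\<in>K. y b = 0) \<longrightarrow> mv n E y = y) \<and>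
     mv n E x = (\<lambda>b. if b \<in> K then (if b = k then v else 0) else x b) \<and>
     (\<forall>g. (\<forall>b\<in>K. g dvd x b) \<longleftrightarrow> g dvd v)"
  using assms(3,4)
proof (induction "\<Sum>b\<in>K. nat \<bar>x b\<bar>" arbitrary: x rule: less_induct)
  case less
  show ?case
  proof (cases "\<exists>a\<in>K. \<exists>b\<in>K. a \<noteq> b \<and> x a \<noteq> 0 \<and> x b \<noteq> 0")
    case False
    from less.prems obtain k where k: "k \<in> K" "x k \<noteq> 0" by auto
    with False have z: "\<And>b. b \<in> K \<Longrightarrow> b \<noteq> k \<Longrightarrow> x b = 0" by blast
    have "mv n idm x = (\<lambda>b. if b \<in> K then (if b = k then x k else 0) else x b)"
      using mv_idm[OF less.prems(1)] z by auto
    moreover have "(\<forall>b\<in>K. g dvd x b) \<longleftrightarrow> g dvd x k" for g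
      using z k by (metis dvd_0_right)
    ultimately show ?thesis using uni_idm k mv_idm
      by blast
  next
    case True
    then obtain a b where ab: "a \<in> K" "b \<in> K" "a \<noteq> b" "x a \<noteq> 0" "x b \<noteq> 0"
      "\<bar>x b\<bar> \<le> \<bar>x a\<bar>"
      by (metis linear)
    define r where "r = (\<lambda>c. if c = a then - (sgn (x a) * sgn (x b)) else (0::int))"
    have an: "a < n" "b < n" using ab assms(2) by auto
    have svr: "sv n r" using an by (simp add: sv_def r_def)
    have rb: "r b = 0" using ab by (simp add: r_def)
    define x' where "x' = mv n (tv n b r) x"
    have x': "x' = (\<lambda>c. x c + x b * r c)" unfolding x'_def by (rule mv_tv[OF an(2) less.prems(1) svr])
    have lt: "(\<Sum>c\<in>K. nat \<bar>x' c\<bar>) < (\<Sum>c\<in>K. nat \<bar>x c\<bar>)"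
    proof -
      have "(\<Sum>c\<in>K. nat \<bar>x' c\<bar>) = nat \<bar>x' a\<bar> + (\<Sum>c\<in>K-{a}. nat \<bar>x' c\<bar>)"
        using ab assms(1) by (simp add: sum.remove)
      also have "(\<Sum>c\<in>K-{a}. nat \<bar>x' c\<bar>) = (\<Sum>c\<in>K-{a}. nat \<bar>x c\<bar>)"
        by (rule sum.cong) (auto simp: x' r_def)
      also have "nat \<bar>x' a\<bar> < nat \<bar>x a\<bar>"
        using euclid_step_abs[of "x a" "x b"] ab by (simp add: x' r_def mult_ac)
      finally show ?thesis
        using ab assms(1) by (simp add: sum.remove)
    qed
    have svx': "sv n x'" unfolding x'_def by (rule sv_mv)
    have nz: "\<exists>c\<in>K. x' c \<noteq> 0" using ab by (intro bexI[of _ b]) (auto simp: x' rb)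
    obtain E1 E1' k v where IH: "uni n E1 E1'" "k \<in> K" "v \<noteq> 0"
      "\<forall>y. sv n y \<longrightarrow> (\<forall>b\<in>K. y b = 0) \<longrightarrow> mv n E1 y = y"
      "mv n E1 x' = (\<lambda>c. if c \<in> K then (if c = k then v else 0) else x' c)"
      "\<forall>g. (\<forall>c\<in>K. g dvd x' c) \<longleftrightarrow> g dvd v"
      using less.hyps[OF lt svx' nz] by blast
    define E where "E = mmul n E1 (tv n b r)"
    define E' where "E' = mmul n (tv n b (\<lambda>c. - r c)) E1'"
    have uE: "uni n E E'" unfolding E_def E'_def
      by (rule uni_mmul[OF uni_tv[of b n r, OF an(2) rb] IH(1)])
    have fixy: "mv n E y = y" if "sv n y" "\<forall>c\<in>K. y c = 0" for y
    proof -
      have "mv n (tv n b r) y = y" using mv_tv[OF an(2) that(1) svr] that ab by auto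
      then show ?thesis using IH(4) that by (simp add: E_def mv_mmul)
    qed
    have Ex: "mv n E x = (\<lambda>c. if c \<in> K then (if c = k then v else 0) else x c)"
    proof -
      have "mv n E x = mv n E1 x'" by (simp add: E_def mv_mmul x'_def)
      also have "\<dots> = (\<lambda>c. if c \<in> K then (if c = k then v else 0) else x c)"
        unfolding IH(5) using ab by (auto simp: x' r_def)
      finally show ?thesis .
    qed
    have dv: "(\<forall>c\<in>K. g dvd x c) \<longleftrightarrow> g dvd v" for g
    proof -
      have xb': "x' b = x b" by (simp add: x' rb)
      have "(\<forall>c\<in>K. g dvd x c) \<longleftrightarrow> (\<forall>c\<in>K. g dvd x' c)"
      proof
        assume h: "\<forall>c\<in>K. g dvd x c"
        then have "g dvd x b" using ab by auto
        then show "\<forall>c\<in>K. g dvd x' c" using h unfolding x' by (auto intro: dvd_add dvd_mult2)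
      next
        assume h: "\<forall>c\<in>K. g dvd x' c"
        then have gb: "g dvd x b" using ab xb' by metis
        have "g dvd x c" if "c \<in> K" for c
        proof -
          have "x c = x' c - x b * r c" by (simp add: x')
          then show ?thesis using h that gb by (metis dvd_diff dvd_mult2)
        qed
        then show "\<forall>c\<in>K. g dvd x c" by blast
      qed
      then show ?thesis using IH(6) by simp
    qed
    show ?thesis using uE IH(2,3) fixy Ex dv by blast
  qed
qed

lemma ksel_aux:
  fixes d :: "nat \<Rightarrow> int"
  assumes "finite S" "k0 \<in> S" "d k0 \<noteq> 0"
  shows "K \<subseteq> S \<Longrightarrow> k0 \<in> K \<Longrightarrow> card K + nat (Gcd (d ` K)) \<le> nat \<bar>d k0\<bar> + 1 \<Longrightarrow>
    \<exists>K'. K' \<subseteq> S \<and> k0 \<in> K' \<and> card K' \<le> nat \<bar>d k0\<bar> \<and> (\<forall>g. (\<forall>b\<in>K'. g dvd d b) \<longrightarrow> (\<forall>b\<in>S. g dvd d b))"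
proof (induction "nat (Gcd (d ` K))" arbitrary: K rule: less_induct)
  case less
  let ?g = "Gcd (d ` K)"
  have gdv: "?g dvd d k0" using less.prems(2) by (intro Gcd_dvd) simp
  have gpos: "?g > 0"
  proof -
    have "?g \<noteq> 0" using less.prems(2) assms(3) by auto
    then show ?thesis using Gcd_int_greater_eq_0[of "d ` K"] by linarith
  qed
  show ?case
  proof (cases "\<forall>b\<in>S. ?g dvd d b")
    case True
    have "card K \<le> nat \<bar>d k0\<bar>" using less.prems(3) gpos by linarith
    moreover have "(\<forall>b\<in>K. g dvd d b) \<longrightarrow> (\<forall>b\<in>S. g dvd d b)" for g
    proof (intro impI ballI)
      fix b assume h: "\<forall>b\<in>K. g dvd d b" and bS: "b \<in> S"
      have "g dvd ?g" using h by (intro Gcd_greatest) auto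
      then show "g dvd d b" using True bS dvd_trans by blast
    qed
    ultimately show ?thesis using less.prems by blast
  next
    case False
    then obtain b where b: "b \<in> S" "\<not> ?g dvd d b" by blast
    have bK: "b \<notin> K"
    proof
      assume "b \<in> K" then have "?g dvd d b" by (intro Gcd_dvd) simp
      then show False using b(2) by blast
    qed
    have finK: "finite K" using less.prems(1) assms(1) finite_subset by blast
    have g': "Gcd (d ` insert b K) = gcd (d b) ?g" by simp
    have g'dv: "gcd (d b) ?g dvd ?g" by simp
    have g'ne: "gcd (d b) ?g \<noteq> ?g"
    proof
      assume "gcd (d b) ?g = ?g" then have "?g dvd d b" by (metis gcd_dvd1)
      then show False using b(2) by blast
    qed
    have g'nn: "gcd (d b) ?g \<ge> 0" by simp
    have "gcd (d b) ?g \<le> ?g" using g'dv gpos by (simp add: zdvd_imp_le)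
    then have lt: "gcd (d b) ?g < ?g" using g'ne by linarith
    have cI: "card (insert b K) = card K + 1" using bK finK by simp
    have nlt: "nat (gcd (d b) ?g) < nat ?g" using lt g'nn gpos by (simp add: zless_nat_conj)
    have "nat (Gcd (d ` insert b K)) < nat ?g" using nlt g' by simp
    moreover have "card (insert b K) + nat (Gcd (d ` insert b K)) \<le> nat \<bar>d k0\<bar> + 1"
      using less.prems(3) cI g' nlt by linarith
    ultimately show ?thesis using less.hyps[of "insert b K"] less.prems b(1) by blast
  qed
qed

lemma ksel:
  fixes d :: "nat \<Rightarrow> int"
  assumes "finite S" "k0 \<in> S" "d k0 \<noteq> 0"
  shows "\<exists>K. K \<subseteq> S \<and> k0 \<in> K \<and> card K \<le> nat \<bar>d k0\<bar> \<and> (\<forall>g. (\<forall>b\<in>K. g dvd d b) \<longrightarrow> (\<forall>b\<in>S. g dvd d b))"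
proof -
  have "Gcd (d ` {k0}) = \<bar>d k0\<bar>" by simp
  then show ?thesis using ksel_aux[of S k0 d "{k0}", OF assms] assms(2) by simp
qed

lemma greedy_step:
  fixes x :: "nat \<Rightarrow> int"
  assumes svx: "sv n x" and low: "\<forall>k<m. x k = 0" and nz: "\<exists>k. x k \<noteq> 0"
    and bd: "\<forall>k. \<bar>x k\<bar> \<le> int c"
  shows "\<exists>W W' K w. uni n W W' \<and> m < n \<and> finite K \<and> card K \<le> c \<and> (\<forall>b\<in>K. m \<le> b \<and> b < n) \<and>
     w > 0 \<and> mv n W x = (\<lambda>a. if a = m then w else 0) \<and>
     (\<forall>y. sv n y \<longrightarrow> (\<forall>b\<in>insert m K. y b = 0) \<longrightarrow> mv n W y = y)"
proof -
  obtain k0 where k0: "x k0 \<noteq> 0" using nz by auto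
  have k0n: "k0 < n" using svx k0 unfolding sv_def by (meson not_le)
  define S where "S = {k. k < n \<and> x k \<noteq> 0}"
  have finS: "finite S" by (simp add: S_def)
  have k0S: "k0 \<in> S" using k0 k0n by (simp add: S_def)
  obtain K where K: "K \<subseteq> S" "k0 \<in> K" "card K \<le> nat \<bar>x k0\<bar>"
    "\<forall>g. (\<forall>b\<in>K. g dvd x b) \<longrightarrow> (\<forall>b\<in>S. g dvd x b)"
    using ksel[of S k0 x, OF finS k0S k0] by blast
  have finK: "finite K" using K(1) finS finite_subset by blast
  have Kn: "K \<subseteq> {..<n}" using K(1) by (auto simp: S_def)
  have Km: "\<forall>b\<in>K. m \<le> b \<and> b < n"
  proof
    fix b assume "b \<in> K"
    then have "b \<in> S" using K(1) by blast
    then have "b < n" "x b \<noteq> 0" by (auto simp: S_def)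
    then show "m \<le> b \<and> b < n" using low by (meson not_le)
  qed
  have "nat \<bar>x k0\<bar> \<le> c" using bd by (simp add: nat_le_iff)
  then have cK: "card K \<le> c" using K(3) by linarith
  obtain E E' k v where Ev: "uni n E E'" "k \<in> K" "v \<noteq> 0"
    "\<forall>y. sv n y \<longrightarrow> (\<forall>b\<in>K. y b = 0) \<longrightarrow> mv n E y = y"
    "mv n E x = (\<lambda>b. if b \<in> K then (if b = k then v else 0) else x b)"
    "\<forall>g. (\<forall>b\<in>K. g dvd x b) \<longleftrightarrow> g dvd v"
  proof -
    have "\<exists>b\<in>K. x b \<noteq> 0" using K(2) k0 by blast
    from euclid[OF finK Kn svx this] show ?thesis using that by blast
  qed
  have vdv: "v dvd x b" for b
  proof (cases "b \<in> S")
    case True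
    have "\<forall>b\<in>K. v dvd x b" using Ev(6) by simp
    then show ?thesis using K(4) True by blast
  next
    case False then have "x b = 0" using svx by (auto simp: S_def sv_def)
    then show ?thesis by simp
  qed
  have kn: "k < n" "m \<le> k" using Km Ev(2) by auto
  then have mn: "m < n" by simp
  define F where "F = (if v < 0 then fl k else idm)"
  have uF: "uni n F F" by (simp add: F_def uni_fl uni_idm)
  define w where "w = \<bar>v\<bar>"
  have wpos: "w > 0" using Ev(3) by (simp add: w_def)
  have wdv: "w dvd x b" for b using vdv[of b] by (simp add: w_def)
  define y1 where "y1 = mv n E x"
  have svy1: "sv n y1" by (simp add: y1_def sv_mv)
  have y1k: "y1 k = v" using Ev(5) Ev(2) by (simp add: y1_def)
  have Ffix: "mv n F y = y" if "sv n y" "y k = 0" for y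
    using that mv_fl[OF kn(1) that(1)] mv_idm[OF that(1)] by (auto simp: F_def)
  have y2: "mv n F y1 = (\<lambda>b. if b \<in> K then (if b = k then w else 0) else x b)"
  proof (cases "v < 0")
    case True
    then have "w = - v" by (simp add: w_def)
    have "mv n F y1 = y1(k := - y1 k)" using True mv_fl[OF kn(1) svy1] by (simp add: F_def)
    also have "\<dots> = (\<lambda>b. if b \<in> K then (if b = k then w else 0) else x b)"
      unfolding y1_def Ev(5) using Ev(2) \<open>w = - v\<close> by (auto simp: fun_eq_iff)
    finally show ?thesis .
  next
    case False
    then show ?thesis using mv_idm[OF svy1] Ev(5) by (auto simp: F_def w_def y1_def)
  qed
  define r where "r = (\<lambda>b. if b \<in> K then 0 else - (x b div w))"
  have svr: "sv n r" using Kn svx by (auto simp: sv_def r_def)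
  have rk: "r k = 0" using Ev(2) by (simp add: r_def)
  define T where "T = tv n k r"
  have uT: "uni n T (tv n k (\<lambda>a. - r a))" unfolding T_def by (rule uni_tv[of k n r, OF kn(1) rk])
  have Tfix: "mv n T y = y" if "sv n y" "y k = 0" for y
    using mv_tv[OF kn(1) that(1) svr] that(2) by (simp add: T_def)
  have svy2: "sv n (mv n F y1)" by (rule sv_mv)
  have y3: "mv n T (mv n F y1) = (\<lambda>b. if b = k then w else 0)"
  proof -
    have "mv n T (mv n F y1) = (\<lambda>a. mv n F y1 a + mv n F y1 k * r a)"
      unfolding T_def by (rule mv_tv[OF kn(1) svy2 svr])
    also have "\<dots> = (\<lambda>b. if b = k then w else 0)"
    proof
      fix b
      have "w * (x b div w) = x b" using wdv[of b] by simp
      then show "mv n F y1 b + mv n F y1 k * r b = (if b = k then w else 0)"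
        unfolding y2 using Ev(2) by (auto simp: r_def)
    qed
    finally show ?thesis .
  qed
  define Sw where "Sw = sw k m"
  have uSw: "uni n Sw Sw" unfolding Sw_def by (rule uni_sw[OF kn(1) mn])
  have sv3: "sv n (\<lambda>b. if b = k then w else 0)" using kn by (simp add: sv_def)
  have y4: "mv n Sw (\<lambda>b. if b = k then w else 0) = (\<lambda>a. if a = m then w else 0)"
    unfolding Sw_def mv_sw[OF kn(1) mn sv3] by (auto simp: tr_def)
  have Swfix: "mv n Sw y = y" if "sv n y" "y k = 0" "y m = 0" for y
    unfolding Sw_def mv_sw[OF kn(1) mn that(1)] using that by (auto simp: tr_def)
  define W where "W = mmul n Sw (mmul n T (mmul n F E))"
  define W' where "W' = mmul n (mmul n (mmul n E' F) (tv n k (\<lambda>a. - r a))) Sw"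
  have uW: "uni n W W'" unfolding W_def W'_def
    by (rule uni_mmul[OF uni_mmul[OF uni_mmul[OF Ev(1) uF] uT] uSw])
  have Wx: "mv n W x = (\<lambda>a. if a = m then w else 0)"
    using y4 y3 by (simp add: W_def mv_mmul y1_def)
  have Wfix: "mv n W y = y" if "sv n y" "\<forall>b\<in>insert m K. y b = 0" for y
  proof -
    have yk: "y k = 0" "y m = 0" using that(2) Ev(2) by auto
    have "mv n E y = y" using Ev(4) that by auto
    then show ?thesis using Ffix[OF that(1) yk(1)] Tfix[OF that(1) yk(1)] Swfix[OF that(1) yk]
      by (simp add: W_def mv_mmul)
  qed
  show ?thesis
    apply (rule exI[of _ W], rule exI[of _ W'], rule exI[of _ K], rule exI[of _ w])
    using uW mn finK cK Km wpos Wx Wfix by simp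
qed

lemma greedy_aux:
  fixes d :: "nat \<Rightarrow> nat \<Rightarrow> int"
  assumes svd: "\<forall>j\<in>J. sv n (d j)" and nz: "\<forall>j\<in>J. \<exists>k. d j k \<noteq> 0"
    and bd: "\<forall>j\<in>J. \<forall>k. \<bar>d j k\<bar> \<le> int c" and col: "\<forall>k. card {j\<in>J. d j k \<noteq> 0} \<le> c"
    and finJ: "finite J"
  shows "R \<subseteq> J \<Longrightarrow> (\<forall>j\<in>R. \<forall>k<m. d j k = 0) \<Longrightarrow> uni n U V \<Longrightarrow> (\<forall>j\<in>R. mv n U (d j) = d j) \<Longrightarrow>
    inj_on js {..<m} \<Longrightarrow> js ` {..<m} \<subseteq> J - R \<Longrightarrow>
    (\<forall>m'<m. g m' > 0 \<and> mv n U (d (js m')) = (\<lambda>a. if a = m' then g m' else 0)) \<Longrightarrow> m \<le> n \<Longrightarrow>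
    \<exists>i js' g' U' V'. m \<le> i \<and> i \<le> n \<and> card R \<le> (i - m) * (1 + (c+1)*c) \<and> uni n U' V' \<and>
      inj_on js' {..<i} \<and> js' ` {..<i} \<subseteq> J \<and>
      (\<forall>m'<i. g' m' > 0 \<and> mv n U' (d (js' m')) = (\<lambda>a. if a = m' then g' m' else 0))"
proof (induction "card R" arbitrary: R m U V js g rule: less_induct)
  case less
  show ?case
  proof (cases "R = {}")
    case True
    show ?thesis
      apply (rule exI[of _ m], rule exI[of _ js], rule exI[of _ g], rule exI[of _ U], rule exI[of _ V])
      using less.prems True by simp
  next
    case False
    then obtain j where jR: "j \<in> R" by blast
    have jJ: "j \<in> J" using jR less.prems(1) by blast
    obtain W W' K w where st: "uni n W W'" "m < n" "finite K" "card K \<le> c" "\<forall>b\<in>K. m \<le> b \<and> b < n"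
      "w > 0" "mv n W (d j) = (\<lambda>a. if a = m then w else 0)"
      "\<forall>y. sv n y \<longrightarrow> (\<forall>b\<in>insert m K. y b = 0) \<longrightarrow> mv n W y = y"
    proof -
      have a1: "sv n (d j)" using svd jJ by blast
      have a2: "\<forall>k<m. d j k = 0" using less.prems(2) jR by blast
      have a3: "\<exists>k. d j k \<noteq> 0" using nz jJ by blast
      have a4: "\<forall>k. \<bar>d j k\<bar> \<le> int c" using bd jJ by blast
      from greedy_step[OF a1 a2 a3 a4] show ?thesis using that by blast
    qed
    define R' where "R' = {j'\<in>R. j' \<noteq> j \<and> (\<forall>b\<in>insert m K. d j' b = 0)}"
    have finR: "finite R" using less.prems(1) finJ finite_subset by blast
    have R'R: "R' \<subseteq> R" "j \<notin> R'" by (auto simp: R'_def)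
    have lt: "card R' < card R" using R'R jR finR by (metis psubset_card_mono psubsetI)
    define X where "X = (\<Union>b\<in>insert m K. {j'\<in>J. d j' b \<noteq> 0})"
    have RX: "R \<subseteq> R' \<union> (insert j X)" using less.prems(1) by (auto simp: R'_def X_def)
    have finX: "finite X" unfolding X_def using finJ st(3) by (intro finite_UN_I) auto
    have cX: "card X \<le> (c+1) * c"
    proof -
      have "card X \<le> (\<Sum>b\<in>insert m K. card {j'\<in>J. d j' b \<noteq> 0})"
        unfolding X_def using st(3) by (intro card_UN_le) simp
      also have "\<dots> \<le> (\<Sum>b\<in>insert m K. c)" using col by (intro sum_mono) auto
      also have "\<dots> = card (insert m K) * c" by simp
      also have "\<dots> \<le> (c+1) * c"
      proof -
        have "card (insert m K) \<le> c + 1" using st(3,4) card_insert_le_m1[of m K]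
          by (simp add: card_insert_if)
        then show ?thesis by (rule mult_le_mono1)
      qed
      finally show ?thesis .
    qed
    have cR: "card R \<le> card R' + (1 + (c+1)*c)"
    proof -
      have "card R \<le> card (R' \<union> insert j X)"
        using RX finR finX R'R(1) by (intro card_mono) (auto intro: finite_subset)
      also have "\<dots> \<le> card R' + card (insert j X)" by (rule card_Un_le)
      also have "\<dots> \<le> card R' + (1 + card X)" using finX by (simp add: card_insert_le_m1 card_insert_if)
      finally show ?thesis using cX by linarith
    qed
    define U' where "U' = mmul n W U"
    define V' where "V' = mmul n V W'"
    have uU': "uni n U' V'" unfolding U'_def V'_def by (rule uni_mmul[OF less.prems(3) st(1)])
    have p1: "R' \<subseteq> J" using R'R less.prems(1) by blast
    have p2: "\<forall>j'\<in>R'. \<forall>k<Suc m. d j' k = 0"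
      using less.prems(2) by (auto simp: R'_def less_Suc_eq)
    have p4: "\<forall>j'\<in>R'. mv n U' (d j') = d j'"
    proof
      fix j' assume j': "j' \<in> R'"
      then have "mv n U (d j') = d j'" using less.prems(4) R'R by blast
      moreover have "mv n W (d j') = d j'"
        using st(8) j' svd p1 by (auto simp: R'_def)
      ultimately show "mv n U' (d j') = d j'" by (simp add: U'_def mv_mmul)
    qed
    have jnot: "j \<notin> js ` {..<m}" using less.prems(6) jR by blast
    have p5: "inj_on (js(m := j)) {..<Suc m}"
      using less.prems(5) jnot by (auto simp: inj_on_def lessThan_Suc less_Suc_eq)
    have p6: "(js(m := j)) ` {..<Suc m} \<subseteq> J - R'"
    proof -
      have h: "js ` {..<m} \<subseteq> J - R'" using less.prems(6) R'R(1) by blast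
      show ?thesis
      proof
        fix y assume "y \<in> (js(m := j)) ` {..<Suc m}"
        then obtain x where x: "x < Suc m" "y = (js(m := j)) x" by (auto simp del: fun_upd_apply)
        show "y \<in> J - R'"
        proof (cases "x = m")
          case True then show ?thesis using x jJ R'R(2) by simp
        next
          case False then have "x < m" using x by simp
          then have "js x \<in> js ` {..<m}" by blast
          then have "js x \<in> J - R'" using h by blast
          then show ?thesis using x False by simp
        qed
      qed
    qed
    have p7: "\<forall>m'<Suc m. (g(m := w)) m' > 0 \<and>
      mv n U' (d ((js(m := j)) m')) = (\<lambda>a. if a = m' then (g(m := w)) m' else 0)"
    proof (intro allI impI)
      fix m' assume m': "m' < Suc m"
      show "(g(m := w)) m' > 0 \<and> mv n U' (d ((js(m := j)) m')) = (\<lambda>a. if a = m' then (g(m := w)) m' else 0)"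
      proof (cases "m' = m")
        case True
        have "mv n U (d j) = d j" using less.prems(4) jR by blast
        then have A: "mv n U' (d j) = (\<lambda>a. if a = m then w else 0)" using st(7) by (simp add: U'_def mv_mmul)
        show ?thesis unfolding True using A st(6) by (simp cong: if_cong)
      next
        case False
        then have m'm: "m' < m" using m' by simp
        have e: "mv n U (d (js m')) = (\<lambda>a. if a = m' then g m' else 0)" "g m' > 0"
          using less.prems(7) m'm by auto
        have sve: "sv n (\<lambda>a. if a = m' then g m' else 0)" using m'm st(2) by (simp add: sv_def)
        have "mv n W (\<lambda>a. if a = m' then g m' else 0) = (\<lambda>a. if a = m' then g m' else 0)"
        proof -
          have "\<forall>b\<in>insert m K. (\<lambda>a. if a = m' then g m' else 0) b = 0"
            using st(5) m'm by fastforce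
          then show ?thesis using st(8) sve by blast
        qed
        then show ?thesis using False e by (simp add: U'_def mv_mmul cong: if_cong)
      qed
    qed
    have p8: "Suc m \<le> n" using st(2) by simp
    obtain i js' g' U'' V'' where res: "Suc m \<le> i" "i \<le> n" "card R' \<le> (i - Suc m) * (1 + (c+1)*c)"
      "uni n U'' V''" "inj_on js' {..<i}" "js' ` {..<i} \<subseteq> J"
      "\<forall>m'<i. g' m' > 0 \<and> mv n U'' (d (js' m')) = (\<lambda>a. if a = m' then g' m' else 0)"
      using less.hyps[OF lt p1 p2 uU' p4 p5 p6 p7 p8] by blast
    have "(i - m) * (1 + (c+1)*c) = (i - Suc m) * (1 + (c+1)*c) + (1 + (c+1)*c)"
    proof -
      have "i - m = Suc (i - Suc m)" using res(1) by simp
      then show ?thesis by simp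
    qed
    then have "card R \<le> (i - m) * (1 + (c+1)*c)" using cR res(3) by linarith
    then show ?thesis using res by (meson Suc_leD)
  qed
qed

lemma greedy:
  fixes d :: "nat \<Rightarrow> nat \<Rightarrow> int"
  assumes svd: "\<forall>j\<in>J. sv n (d j)" and nz: "\<forall>j\<in>J. \<exists>k. d j k \<noteq> 0"
    and bd: "\<forall>j\<in>J. \<forall>k. \<bar>d j k\<bar> \<le> int c" and col: "\<forall>k. card {j\<in>J. d j k \<noteq> 0} \<le> c"
    and finJ: "finite J"
  shows "\<exists>i js g U V. i \<le> n \<and> card J \<le> i * (1 + (c+1)*c) \<and> uni n U V \<and>
      inj_on js {..<i} \<and> js ` {..<i} \<subseteq> J \<and>
      (\<forall>m<i. g m > 0 \<and> mv n U (d (js m)) = (\<lambda>a. if a = m then g m else 0))"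
proof -
  have "\<exists>i js' g' U' V'. 0 \<le> i \<and> i \<le> n \<and> card J \<le> (i - 0) * (1 + (c+1)*c) \<and> uni n U' V' \<and>
      inj_on js' {..<i} \<and> js' ` {..<i} \<subseteq> J \<and>
      (\<forall>m'<i. g' m' > 0 \<and> mv n U' (d (js' m')) = (\<lambda>a. if a = m' then g' m' else 0))"
    by (rule greedy_aux[OF assms, of J 0 idm idm "\<lambda>_. 0" "\<lambda>_. 0"])
      (use svd mv_idm uni_idm in auto)
  then show ?thesis by auto
qed

lemma of_int_floor_Ints: "(x::real) \<in> \<int> \<Longrightarrow> of_int \<lfloor>x\<rfloor> = x"
  by (metis Ints_cases floor_of_int)

lemma mem_conv: assumes "finite S" "s \<in> S" shows "s \<in> conv_fin S"
proof -
  have "(\<lambda>k. \<Sum>y\<in>S. (if y = s then 1 else 0) * y k) = s"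
  proof
    fix k
    have "(\<Sum>y\<in>S. (if y = s then 1 else 0) * y k) = (\<Sum>y\<in>S. if y = s then y k else 0)"
      by (rule sum.cong) auto
    also have "\<dots> = s k" using assms by (simp add: sum.delta)
    finally show "(\<Sum>y\<in>S. (if y = s then 1 else 0) * y k) = s k" .
  qed
  moreover have "(\<Sum>y\<in>S. (if y = s then 1 else 0)::real) = 1" using assms by (simp add: sum.delta)
  ultimately show ?thesis unfolding conv_fin_def
    by (intro CollectI exI[of _ "\<lambda>y. if y = s then 1 else 0"]) auto
qed

lemma conv_convex:
  assumes "x \<in> conv_fin S" "y \<in> conv_fin S" "0 \<le> t" "t \<le> 1"
  shows "(\<lambda>k. (1 - t) * x k + t * y k) \<in> conv_fin S"
proof -
  obtain u where u: "\<forall>z\<in>S. 0 \<le> u z" "(\<Sum>z\<in>S. u z) = 1" "x = (\<lambda>k. \<Sum>z\<in>S. u z * z k)"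
    using assms(1) by (auto simp: conv_fin_def)
  obtain v where v: "\<forall>z\<in>S. 0 \<le> v z" "(\<Sum>z\<in>S. v z) = 1" "y = (\<lambda>k. \<Sum>z\<in>S. v z * z k)"
    using assms(2) by (auto simp: conv_fin_def)
  show ?thesis unfolding conv_fin_def
  proof (rule CollectI, rule exI[of _ "\<lambda>z. (1 - t) * u z + t * v z"], intro conjI)
    show "\<forall>z\<in>S. 0 \<le> (1 - t) * u z + t * v z" using u v assms(3,4) by auto
    show "(\<Sum>z\<in>S. (1 - t) * u z + t * v z) = 1"
      using u v by (simp add: sum.distrib sum_distrib_left[symmetric])
    show "(\<lambda>k. (1 - t) * x k + t * y k) = (\<lambda>k. \<Sum>z\<in>S. ((1 - t) * u z + t * v z) * z k)"
      using u(3) v(3) by (simp add: sum.distrib sum_distrib_left distrib_right mult.assoc)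
  qed
qed

lemma conv_zero:
  assumes "x \<in> conv_fin S" "\<forall>s\<in>S. s k = 0"
  shows "x k = 0"
  using assms by (auto simp: conv_fin_def intro!: sum.neutral)

lemma conv_single: "conv_fin {a} = {a}"
  by (auto simp: conv_fin_def intro!: exI[of _ "\<lambda>_. 1"])

lemma conv_pair:
  assumes "x \<in> conv_fin {a, b}"
  shows "\<exists>\<theta>. 0 \<le> \<theta> \<and> \<theta> \<le> 1 \<and> x = (\<lambda>k. a k + \<theta> * (b k - a k))"
proof (cases "a = b")
  case True
  then show ?thesis using assms conv_single by (intro exI[of _ 0]) auto
next
  case False
  obtain u where u: "\<forall>z\<in>{a,b}. 0 \<le> u z" "(\<Sum>z\<in>{a,b}. u z) = 1" "x = (\<lambda>k. \<Sum>z\<in>{a,b}. u z * z k)"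
    using assms by (auto simp: conv_fin_def)
  have "u a + u b = 1" "x = (\<lambda>k. u a * a k + u b * b k)" using u False by auto
  then have "x = (\<lambda>k. (1 - u b) * a k + u b * b k)"
    by (metis add_diff_cancel_right')
  moreover have "u b \<le> 1" using \<open>u a + u b = 1\<close> u(1) by auto
  ultimately show ?thesis using u(1) by (intro exI[of _ "u b"]) (auto simp: algebra_simps)
qed

lemma msum_list_iff:
  "x \<in> msum_list Ps \<longleftrightarrow>
   (\<exists>f. (\<forall>j<length Ps. f j \<in> Ps ! j) \<and> x = (\<lambda>k. \<Sum>j<length Ps. f j k))"
proof (induction Ps arbitrary: x)
  case Nil
  then show ?case by (simp add: msum_list_def)
next
  case (Cons P Ps)
  have ms: "msum_list (P # Ps) = msum P (msum_list Ps)" by (simp add: msum_list_def)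
  show ?case
  proof
    assume "x \<in> msum_list (P # Ps)"
    then obtain p y where py: "p \<in> P" "y \<in> msum_list Ps" "x = (\<lambda>k. p k + y k)"
      unfolding ms msum_def by blast
    obtain f where f: "\<forall>j<length Ps. f j \<in> Ps ! j" "y = (\<lambda>k. \<Sum>j<length Ps. f j k)"
      using Cons.IH py(2) by blast
    define f' where "f' = (\<lambda>j. case j of 0 \<Rightarrow> p | Suc j' \<Rightarrow> f j')"
    have "\<forall>j<length (P # Ps). f' j \<in> (P # Ps) ! j"
      using f py(1) by (auto simp: f'_def less_Suc_eq_0_disj)
    moreover have "x = (\<lambda>k. \<Sum>j<length (P # Ps). f' j k)"
      unfolding length_Cons sum.lessThan_Suc_shift using py(3) f(2) by (simp add: f'_def)
    ultimately show "\<exists>f. (\<forall>j<length (P # Ps). f j \<in> (P # Ps) ! j) \<and> x = (\<lambda>k. \<Sum>j<length (P # Ps). f j k)"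
      by blast
  next
    assume "\<exists>f. (\<forall>j<length (P # Ps). f j \<in> (P # Ps) ! j) \<and> x = (\<lambda>k. \<Sum>j<length (P # Ps). f j k)"
    then obtain f where f: "\<forall>j<length (P # Ps). f j \<in> (P # Ps) ! j" "x = (\<lambda>k. \<Sum>j<length (P # Ps). f j k)"
      by blast
    have "(\<lambda>k. \<Sum>j<length Ps. f (Suc j) k) \<in> msum_list Ps"
      using Cons.IH f(1) by (intro Cons.IH[THEN iffD2] exI[of _ "\<lambda>j. f (Suc j)"]) auto
    moreover have "f 0 \<in> P" using f(1) by auto
    moreover have "x = (\<lambda>k. f 0 k + (\<Sum>j<length Ps. f (Suc j) k))"
      using f(2) unfolding length_Cons sum.lessThan_Suc_shift by simp
    ultimately show "x \<in> msum_list (P # Ps)" unfolding ms msum_def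
      by (intro CollectI exI[of _ "f 0"] exI[of _ "\<lambda>k. \<Sum>j<length Ps. f (Suc j) k"]) auto
  qed
qed

lemma conv_image:
  assumes "finite A" "finite S" "g ` A \<subseteq> S" "\<forall>p\<in>A. 0 \<le> W p" "(\<Sum>p\<in>A. W p) = 1"
  shows "(\<lambda>k. \<Sum>p\<in>A. W p * g p k) \<in> conv_fin S"
proof -
  define u where "u = (\<lambda>s. \<Sum>p\<in>{p. p \<in> A \<and> g p = s}. W p)"
  have u0: "\<forall>s\<in>S. 0 \<le> u s" using assms(4) by (auto simp: u_def intro!: sum_nonneg)
  have u1: "(\<Sum>s\<in>S. u s) = 1" unfolding u_def using sum.group[OF assms(1,2,3), of W] assms(5) by simp
  have u2: "(\<Sum>s\<in>S. u s * s k) = (\<Sum>p\<in>A. W p * g p k)" for k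
  proof -
    have "(\<Sum>s\<in>S. u s * s k) = (\<Sum>s\<in>S. \<Sum>p\<in>{p. p \<in> A \<and> g p = s}. W p * g p k)"
      unfolding u_def sum_distrib_right by (intro sum.cong refl) auto
    also have "\<dots> = (\<Sum>p\<in>A. W p * g p k)" by (rule sum.group[OF assms(1,2,3)])
    finally show ?thesis .
  qed
  show ?thesis unfolding conv_fin_def using u0 u1 u2 by (intro CollectI exI[of _ u]) auto
qed

lemma msum_conv:
  assumes S: "finite S" and T: "finite T"
  shows "msum (conv_fin S) (conv_fin T) = conv_fin ((\<lambda>(s,t). (\<lambda>k. s k + t k)) ` (S \<times> T))"
    (is "_ = conv_fin (?h ` (S \<times> T))")
proof
  show "msum (conv_fin S) (conv_fin T) \<subseteq> conv_fin (?h ` (S \<times> T))"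
  proof
    fix z assume "z \<in> msum (conv_fin S) (conv_fin T)"
    then obtain x y where xy: "x \<in> conv_fin S" "y \<in> conv_fin T" "z = (\<lambda>k. x k + y k)"
      by (auto simp: msum_def)
    obtain u where u: "\<forall>z\<in>S. 0 \<le> u z" "(\<Sum>z\<in>S. u z) = 1" "x = (\<lambda>k. \<Sum>z\<in>S. u z * z k)"
      using xy(1) by (auto simp: conv_fin_def)
    obtain v where v: "\<forall>z\<in>T. 0 \<le> v z" "(\<Sum>z\<in>T. v z) = 1" "y = (\<lambda>k. \<Sum>z\<in>T. v z * z k)"
      using xy(2) by (auto simp: conv_fin_def)
    define W where "W = (\<lambda>p. u (fst p) * v (snd p))"
    have fin: "finite (S \<times> T)" using S T by simp
    have W1: "(\<Sum>p\<in>S \<times> T. W p) = 1"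
    proof -
      have "(\<Sum>p\<in>S \<times> T. W p) = (\<Sum>s\<in>S. \<Sum>t\<in>T. u s * v t)"
        by (simp add: sum.cartesian_product case_prod_beta W_def)
      also have "\<dots> = (\<Sum>s\<in>S. u s) * (\<Sum>t\<in>T. v t)" by (simp add: sum_product)
      finally show ?thesis using u(2) v(2) by simp
    qed
    have W0: "\<forall>p\<in>S \<times> T. 0 \<le> W p" using u(1) v(1) by (auto simp: W_def)
    have "(\<lambda>k. \<Sum>p\<in>S \<times> T. W p * ?h p k) \<in> conv_fin (?h ` (S \<times> T))"
      by (rule conv_image[OF fin _ _ W0 W1]) (use fin in auto)
    moreover have "(\<lambda>k. \<Sum>p\<in>S \<times> T. W p * ?h p k) = z"
    proof
      fix k
      have "(\<Sum>p\<in>S \<times> T. W p * ?h p k) = (\<Sum>s\<in>S. \<Sum>t\<in>T. u s * v t * (s k + t k))"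
        by (simp add: sum.cartesian_product W_def case_prod_beta)
      also have "\<dots> = (\<Sum>s\<in>S. u s * s k * (\<Sum>t\<in>T. v t)) + (\<Sum>s\<in>S. u s * (\<Sum>t\<in>T. v t * t k))"
        by (simp add: algebra_simps sum.distrib sum_distrib_left sum_distrib_right)
      also have "\<dots> = x k + y k" using u(2,3) v(2,3) by (simp add: sum_distrib_right[symmetric])
      finally show "(\<Sum>p\<in>S \<times> T. W p * ?h p k) = z k" using xy(3) by simp
    qed
    ultimately show "z \<in> conv_fin (?h ` (S \<times> T))" by simp
  qed
next
  show "conv_fin (?h ` (S \<times> T)) \<subseteq> msum (conv_fin S) (conv_fin T)"
  proof
    fix z assume "z \<in> conv_fin (?h ` (S \<times> T))"
    then obtain W where W: "\<forall>p\<in>?h ` (S \<times> T). 0 \<le> W p" "(\<Sum>p\<in>?h ` (S \<times> T). W p) = 1"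
      "z = (\<lambda>k. \<Sum>p\<in>?h ` (S \<times> T). W p * p k)"
      by (auto simp: conv_fin_def)
    define A where "A = ?h ` (S \<times> T)"
    have finA: "finite A" using S T by (simp add: A_def)
    define \<sigma> where "\<sigma> = (\<lambda>p. SOME q. q \<in> S \<times> T \<and> ?h q = p)"
    have \<sigma>: "\<sigma> p \<in> S \<times> T \<and> ?h (\<sigma> p) = p" if "p \<in> A" for p
    proof -
      have "\<exists>q. q \<in> S \<times> T \<and> ?h q = p" using that by (auto simp: A_def)
      then show ?thesis unfolding \<sigma>_def by (rule someI_ex)
    qed
    have \<sigma>S: "fst (\<sigma> p) \<in> S" "snd (\<sigma> p) \<in> T" if "p \<in> A" for p
      using \<sigma>[OF that] by (auto simp: mem_Times_iff)
    have WA: "\<forall>p\<in>A. 0 \<le> W p" "(\<Sum>p\<in>A. W p) = 1" using W(1,2) by (simp_all add: A_def)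
    have x: "(\<lambda>k. \<Sum>p\<in>A. W p * (fst \<circ> \<sigma>) p k) \<in> conv_fin S"
      by (rule conv_image[OF finA S _ WA]) (use \<sigma>S in auto)
    have y: "(\<lambda>k. \<Sum>p\<in>A. W p * (snd \<circ> \<sigma>) p k) \<in> conv_fin T"
      by (rule conv_image[OF finA T _ WA]) (use \<sigma>S in auto)
    have "z = (\<lambda>k. (\<Sum>p\<in>A. W p * (fst \<circ> \<sigma>) p k) + (\<Sum>p\<in>A. W p * (snd \<circ> \<sigma>) p k))"
    proof
      fix k
      have "z k = (\<Sum>p\<in>A. W p * ?h (\<sigma> p) k)" using W(3) \<sigma> by (auto simp: A_def intro!: sum.cong)
      also have "\<dots> = (\<Sum>p\<in>A. W p * (fst \<circ> \<sigma>) p k) + (\<Sum>p\<in>A. W p * (snd \<circ> \<sigma>) p k)"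
        by (simp add: case_prod_beta distrib_left sum.distrib)
      finally show "z k = (\<Sum>p\<in>A. W p * (fst \<circ> \<sigma>) p k) + (\<Sum>p\<in>A. W p * (snd \<circ> \<sigma>) p k)" .
    qed
    then show "z \<in> msum (conv_fin S) (conv_fin T)" using x y unfolding msum_def
      by (intro CollectI exI[of _ "\<lambda>k. \<Sum>p\<in>A. W p * (fst \<circ> \<sigma>) p k"]
        exI[of _ "\<lambda>k. \<Sum>p\<in>A. W p * (snd \<circ> \<sigma>) p k"]) simp
  qed
qed

lemma lattice_msum:
  assumes "lattice_polytope n A" "lattice_polytope n B"
  shows "lattice_polytope n (msum A B)"
proof -
  obtain S where S: "finite S" "S \<noteq> {}" "\<forall>x\<in>S. in_lattice n x" "A = conv_fin S"
    using assms(1) by (auto simp: lattice_polytope_def)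
  obtain T where T: "finite T" "T \<noteq> {}" "\<forall>x\<in>T. in_lattice n x" "B = conv_fin T"
    using assms(2) by (auto simp: lattice_polytope_def)
  have "\<forall>x\<in>(\<lambda>(s,t). (\<lambda>k. s k + t k)) ` (S \<times> T). in_lattice n x"
    using S(3) T(3) by (auto simp: in_lattice_def)
  then show ?thesis unfolding lattice_polytope_def S(4) T(4) msum_conv[OF S(1) T(1)]
    using S(1,2) T(1,2) by (intro exI[of _ "(\<lambda>(s,t). (\<lambda>k. s k + t k)) ` (S \<times> T)"]) auto
qed

lemma lattice_msum_list:
  assumes "\<forall>Q\<in>set Ps. lattice_polytope n Q"
  shows "lattice_polytope n (msum_list Ps)"
  using assms
proof (induction Ps)
  case Nil
  have "lattice_polytope n (conv_fin {\<lambda>k. 0})" unfolding lattice_polytope_def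
    by (intro exI[of _ "{\<lambda>k. 0}"]) (auto simp: in_lattice_def)
  then show ?case by (simp add: msum_list_def conv_single)
next
  case (Cons P Ps)
  then show ?case using lattice_msum by (simp add: msum_list_def)
qed

definition box :: "nat \<Rightarrow> nat \<Rightarrow> (nat \<Rightarrow> real) set \<Rightarrow> bool" where
  "box n c X \<longleftrightarrow> (\<forall>x\<in>X. \<forall>j<n. 0 \<le> x j \<and> x j \<le> real c)"

lemma box_mono: "box n c P \<Longrightarrow> Q \<subseteq> P \<Longrightarrow> box n c Q"
  by (auto simp: box_def)

lemma two_points:
  assumes "lattice_polytope n Q" "pos_dim Q"
  shows "\<exists>s t. s \<in> Q \<and> t \<in> Q \<and> in_lattice n s \<and> in_lattice n t \<and> s \<noteq> t"
proof -
  obtain S where S: "finite S" "S \<noteq> {}" "\<forall>x\<in>S. in_lattice n x" "Q = conv_fin S"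
    using assms(1) by (auto simp: lattice_polytope_def)
  show ?thesis
  proof (cases "\<exists>s\<in>S. \<exists>t\<in>S. s \<noteq> t")
    case True
    then obtain s t where "s \<in> S" "t \<in> S" "s \<noteq> t" by blast
    then show ?thesis using S mem_conv by blast
  next
    case False
    then obtain s0 where "S = {s0}" using S(2) by blast
    then have "Q = {s0}" using S(4) conv_single by simp
    then show ?thesis using assms(2) by (auto simp: pos_dim_def)
  qed
qed

lemma Ints_abs_ge1: "(x::real) \<in> \<int> \<Longrightarrow> x \<noteq> 0 \<Longrightarrow> 1 \<le> \<bar>x\<bar>"
  by (elim Ints_cases) auto

lemma width:
  assumes decomp: "\<forall>Q\<in>set Ps. lattice_polytope n Q \<and> pos_dim Q"
    and bx: "box n c (msum_list Ps)"
  shows "\<exists>s t. (\<forall>j<length Ps. s j \<in> Ps!j \<and> t j \<in> Ps!j \<and> in_lattice n (s j) \<and> in_lattice n (t j) \<and> s j \<noteq> t j)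
     \<and> (\<forall>k<n. (\<Sum>j<length Ps. \<bar>t j k - s j k\<bar>) \<le> real c)"
proof -
  let ?L = "length Ps"
  have "\<forall>j. \<exists>p. j < ?L \<longrightarrow> fst p \<in> Ps!j \<and> snd p \<in> Ps!j \<and> in_lattice n (fst p) \<and> in_lattice n (snd p) \<and> fst p \<noteq> snd p"
  proof
    fix j
    show "\<exists>p. j < ?L \<longrightarrow> fst p \<in> Ps!j \<and> snd p \<in> Ps!j \<and> in_lattice n (fst p) \<and> in_lattice n (snd p) \<and> fst p \<noteq> snd p"
    proof (cases "j < ?L")
      case True
      then have "Ps!j \<in> set Ps" by simp
      then obtain s t where "s \<in> Ps!j" "t \<in> Ps!j" "in_lattice n s" "in_lattice n t" "s \<noteq> t"
        using two_points decomp by blast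
      then show ?thesis by (intro exI[of _ "(s,t)"]) auto
    qed auto
  qed
  then obtain p where p: "\<forall>j<?L. fst (p j) \<in> Ps!j \<and> snd (p j) \<in> Ps!j \<and> in_lattice n (fst (p j)) \<and> in_lattice n (snd (p j)) \<and> fst (p j) \<noteq> snd (p j)"
  proof -
    from choice[OF \<open>\<forall>j. \<exists>p. _\<close>] obtain p where
      "\<forall>j. j < ?L \<longrightarrow> fst (p j) \<in> Ps!j \<and> snd (p j) \<in> Ps!j \<and> in_lattice n (fst (p j)) \<and> in_lattice n (snd (p j)) \<and> fst (p j) \<noteq> snd (p j)"
      by blast
    then show ?thesis using that by blast
  qed
  define s where "s = (\<lambda>j. fst (p j))"
  define t where "t = (\<lambda>j. snd (p j))"
  have col: "(\<Sum>j<?L. \<bar>t j k - s j k\<bar>) \<le> real c" if k: "k < n" for k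
  proof -
    define hi where "hi = (\<lambda>j. if s j k \<le> t j k then t j else s j)"
    define lo where "lo = (\<lambda>j. if s j k \<le> t j k then s j else t j)"
    have "\<forall>j<?L. hi j \<in> Ps!j" using p by (simp add: hi_def s_def t_def)
    then have "(\<lambda>k. \<Sum>j<?L. hi j k) \<in> msum_list Ps"
      by (intro msum_list_iff[THEN iffD2] exI[of _ hi]) simp
    then have h: "(\<Sum>j<?L. hi j k) \<le> real c" using bx k by (auto simp: box_def)
    have "\<forall>j<?L. lo j \<in> Ps!j" using p by (simp add: lo_def s_def t_def)
    then have "(\<lambda>k. \<Sum>j<?L. lo j k) \<in> msum_list Ps"
      by (intro msum_list_iff[THEN iffD2] exI[of _ lo]) simp
    then have l: "0 \<le> (\<Sum>j<?L. lo j k)" using bx k by (auto simp: box_def)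
    have "(\<Sum>j<?L. \<bar>t j k - s j k\<bar>) = (\<Sum>j<?L. hi j k - lo j k)"
      by (rule sum.cong) (auto simp: hi_def lo_def)
    also have "\<dots> = (\<Sum>j<?L. hi j k) - (\<Sum>j<?L. lo j k)" by (simp add: sum_subtractf)
    finally show ?thesis using h l by linarith
  qed
  have pp: "\<forall>j<length Ps. s j \<in> Ps!j \<and> t j \<in> Ps!j \<and> in_lattice n (s j) \<and> in_lattice n (t j) \<and> s j \<noteq> t j"
    using p unfolding s_def t_def by blast
  show ?thesis using pp col by blast
qed

lemma len_bound:
  assumes decomp: "\<forall>Q\<in>set Ps. lattice_polytope n Q \<and> pos_dim Q"
    and bx: "box n c (msum_list Ps)"
  shows "length Ps \<le> n * c"
proof -
  let ?L = "length Ps"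
  obtain s t where st: "\<forall>j<?L. s j \<in> Ps!j \<and> t j \<in> Ps!j \<and> in_lattice n (s j) \<and> in_lattice n (t j) \<and> s j \<noteq> t j"
    "\<forall>k<n. (\<Sum>j<?L. \<bar>t j k - s j k\<bar>) \<le> real c"
    using width[OF assms] by blast
  have one: "1 \<le> (\<Sum>k<n. \<bar>t j k - s j k\<bar>)" if j: "j < ?L" for j
  proof -
    have l: "in_lattice n (s j)" "in_lattice n (t j)" "s j \<noteq> t j" using st(1) j by auto
    then obtain k where k: "s j k \<noteq> t j k" by (auto simp: fun_eq_iff)
    have kn: "k < n"
    proof (rule ccontr)
      assume "\<not> k < n"
      then have "s j k = 0" "t j k = 0" using l by (auto simp: in_lattice_def)
      then show False using k by simp
    qed
    have "t j k - s j k \<in> \<int>" using l by (auto simp: in_lattice_def)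
    then have "1 \<le> \<bar>t j k - s j k\<bar>" using k by (intro Ints_abs_ge1) auto
    also have "\<dots> \<le> (\<Sum>k<n. \<bar>t j k - s j k\<bar>)"
      using kn by (intro member_le_sum) auto
    finally show ?thesis .
  qed
  have "real ?L = (\<Sum>j<?L. 1)" by simp
  also have "\<dots> \<le> (\<Sum>j<?L. \<Sum>k<n. \<bar>t j k - s j k\<bar>)" using one by (intro sum_mono) auto
  also have "\<dots> = (\<Sum>k<n. \<Sum>j<?L. \<bar>t j k - s j k\<bar>)" by (rule sum.swap)
  also have "\<dots> \<le> (\<Sum>k<n. real c)" using st(2) by (intro sum_mono) auto
  also have "\<dots> = real (n * c)" by simp
  finally show ?thesis by linarith
qed

definition mpred :: "nat \<Rightarrow> (nat \<Rightarrow> real) set \<Rightarrow> nat \<Rightarrow> bool" where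
  "mpred n P l \<longleftrightarrow> (l = 0 \<or>
     (\<exists>Ps. length Ps = l \<and> (\<forall>Q\<in>set Ps. lattice_polytope n Q \<and> pos_dim Q) \<and> P = msum_list Ps))"

lemma mink_eq: "mink_length n P = Greatest (mpred n P)"
  unfolding mink_length_def by (rule arg_cong[where f=Greatest]) (simp add: fun_eq_iff mpred_def)

lemma mpred_bound: assumes "box n c P" "mpred n P l" shows "l \<le> n * c"
proof (cases "l = 0")
  case False
  then obtain Ps where Ps: "length Ps = l" "\<forall>Q\<in>set Ps. lattice_polytope n Q \<and> pos_dim Q" "P = msum_list Ps"
    using assms(2) unfolding mpred_def by blast
  have "box n c (msum_list Ps)" using assms(1) Ps(3) by simp
  from len_bound[OF Ps(2) this] show ?thesis using Ps(1) by simp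
qed simp

lemma mink_ge:
  assumes "box n c P" "mpred n P l"
  shows "l \<le> mink_length n P"
proof -
  have "\<And>y. mpred n P y \<Longrightarrow> y \<le> n * c" using assms(1) mpred_bound by blast
  from Greatest_le_nat[of "mpred n P" l "n * c", OF assms(2) this] show ?thesis by (simp add: mink_eq)
qed

lemma mink_pred:
  assumes "box n c P"
  shows "mpred n P (mink_length n P)"
proof -
  have "\<forall>y. mpred n P y \<longrightarrow> y \<le> n * c" using assms(1) mpred_bound by blast
  moreover have "mpred n P 0" by (simp add: mpred_def)
  ultimately show ?thesis using GreatestI_nat[of "mpred n P" 0 "n * c"] by (simp add: mink_eq)
qed

lemma mink_le: "box n c P \<Longrightarrow> mink_length n P \<le> n * c"
  using mink_pred mpred_bound by blast

definition fpred :: "nat \<Rightarrow> (nat \<Rightarrow> real) set \<Rightarrow> nat \<Rightarrow> bool" where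
  "fpred n P k \<longleftrightarrow> (\<exists>Q. lattice_polytope n Q \<and> Q \<subseteq> P \<and> k = mink_length n Q)"

lemma full_eq: "full_mink_length n P = Greatest (fpred n P)"
  unfolding full_mink_length_def by (rule arg_cong[where f=Greatest]) (simp add: fun_eq_iff fpred_def)

lemma fpred_bound: assumes "box n c P" "fpred n P k" shows "k \<le> n * c"
proof -
  obtain Q where Q: "Q \<subseteq> P" "k = mink_length n Q" using assms(2) unfolding fpred_def by blast
  have "box n c Q" using box_mono[OF assms(1) Q(1)] .
  then show ?thesis using mink_le Q(2) by simp
qed

lemma full_ge:
  assumes "box n c P" "lattice_polytope n Q" "Q \<subseteq> P"
  shows "mink_length n Q \<le> full_mink_length n P"
proof -
  have "\<forall>y. fpred n P y \<longrightarrow> y \<le> n * c" using assms(1) fpred_bound by blast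
  moreover have "fpred n P (mink_length n Q)" using assms(2,3) unfolding fpred_def by blast
  ultimately show ?thesis using Greatest_le_nat[of "fpred n P" "mink_length n Q" "n * c"] by (simp add: full_eq)
qed

lemma full_pred:
  assumes "box n c P" "lattice_polytope n P"
  shows "fpred n P (full_mink_length n P)"
proof -
  have "\<forall>y. fpred n P y \<longrightarrow> y \<le> n * c" using assms(1) fpred_bound by blast
  moreover have "fpred n P (mink_length n P)" using assms(2) unfolding fpred_def by blast
  ultimately show ?thesis using GreatestI_nat[of "fpred n P" "mink_length n P" "n * c"] by (simp add: full_eq)
qed

definition cpred :: "nat \<Rightarrow> (nat \<Rightarrow> real) set \<Rightarrow> nat \<Rightarrow> bool" where
  "cpred n P i \<longleftrightarrow> i \<le> n \<and> (\<exists>M lam. unimodular n M \<and> (\<forall>k\<ge>n. lam k = 0) \<and>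
        aff_map n M lam ` unit_cube i \<subseteq> P)"

lemma cube_eq: "cube_number n P = Greatest (cpred n P)"
  unfolding cube_number_def by (rule arg_cong[where f=Greatest]) (simp add: fun_eq_iff cpred_def)

lemma cube_ge: "cpred n P i \<Longrightarrow> i \<le> cube_number n P"
  unfolding cube_eq by (rule Greatest_le_nat[of _ _ n]) (auto simp: cpred_def)

lemma unimodular_idm: "unimodular n idm"
  unfolding unimodular_def
  by (rule exI[of _ idm]) (simp add: mmul_idm_left[unfolded mmul_def] idm_def)

lemma cpred0:
  assumes "lattice_polytope n P"
  shows "cpred n P 0"
proof -
  obtain S where S: "finite S" "S \<noteq> {}" "\<forall>x\<in>S. in_lattice n x" "P = conv_fin S"
    using assms by (auto simp: lattice_polytope_def)
  obtain s0 where s0: "s0 \<in> S" using S(2) by blast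
  have s0P: "s0 \<in> P" using mem_conv[OF S(1) s0] S(4) by simp
  have l: "in_lattice n s0" using S(3) s0 by blast
  define lam where "lam = (\<lambda>k. if k < n then \<lfloor>s0 k\<rfloor> else 0)"
  have "aff_map n idm lam x = s0" if "x \<in> unit_cube 0" for x
  proof
    fix k
    have x0: "x = (\<lambda>_. 0)" using that by (auto simp: unit_cube_def)
    show "aff_map n idm lam x k = s0 k"
      using l by (auto simp: aff_map_def x0 lam_def in_lattice_def of_int_floor_Ints)
  qed
  then have "aff_map n idm lam ` unit_cube 0 \<subseteq> P" using s0P by auto
  moreover have "\<forall>k\<ge>n. lam k = 0" by (simp add: lam_def)
  ultimately show ?thesis unfolding cpred_def using unimodular_idm by blast
qed

lemma cube_pred:
  assumes "lattice_polytope n P"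
  shows "cpred n P (cube_number n P)"
  unfolding cube_eq using cpred0[OF assms]
  by (rule GreatestI_nat[of _ _ n]) (auto simp: cpred_def)

lemma col_nonzero:
  assumes "unimodular n M" "m < n"
  shows "\<exists>k<n. M k m \<noteq> 0"
proof (rule ccontr)
  assume "\<not> ?thesis"
  then have z: "\<forall>k<n. M k m = 0" by auto
  obtain N where "\<forall>a<n. \<forall>b<n. (\<Sum>c<n. N a c * M c b) = (if a = b then 1 else 0)"
    using assms(1) unfolding unimodular_def by blast
  then have "(\<Sum>c<n. N m c * M c m) = 1" using assms(2) by auto
  moreover have "(\<Sum>c<n. N m c * M c m) = 0" using z by simp
  ultimately show False by simp
qed

lemma easy:
  assumes lp: "lattice_polytope n P" and bx: "box n c P"
  shows "cube_number n P \<le> full_mink_length n P"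
proof -
  define i where "i = cube_number n P"
  obtain M lam where hML: "i \<le> n" "unimodular n M" "\<forall>k\<ge>n. lam k = 0" "aff_map n M lam ` unit_cube i \<subseteq> P"
    using cube_pred[OF lp] unfolding cpred_def i_def by blast
  show ?thesis
  proof (cases "i = 0")
    case True then show ?thesis by (simp add: i_def)
  next
    case False
    define col where "col = (\<lambda>m k. if k < n then real_of_int (M k m) else 0)"
    define base where "base = (\<lambda>m::nat. if m = 0 then (\<lambda>k. real_of_int (lam k)) else (\<lambda>k. 0))"
    define seg where "seg = (\<lambda>m::nat. conv_fin {base m, \<lambda>k. base m k + col m k})"
    define Ps where "Ps = map seg [0..<i]"
    have lenPs: "length Ps = i" by (simp add: Ps_def)
    have Psj: "Ps ! m = seg m" if "m < i" for m using that by (simp add: Ps_def)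
    have segok: "lattice_polytope n (seg m) \<and> pos_dim (seg m)" if m: "m < i" for m
    proof
      have l1: "in_lattice n (base m)" using hML(3) by (auto simp: in_lattice_def base_def)
      have l2: "in_lattice n (\<lambda>k. base m k + col m k)"
        using hML(3) by (auto simp: in_lattice_def base_def col_def)
      show "lattice_polytope n (seg m)" unfolding lattice_polytope_def seg_def
        using l1 l2 by (intro exI[of _ "{base m, \<lambda>k. base m k + col m k}"]) auto
      have "m < n" using m hML(1) by simp
      then obtain k where k: "k < n" "M k m \<noteq> 0" using col_nonzero[OF hML(2)] by blast
      have "base m \<noteq> (\<lambda>k. base m k + col m k)"
      proof
        assume "base m = (\<lambda>k. base m k + col m k)"
        then have "base m k = base m k + col m k" by (metis)
        then show False using k by (simp add: col_def)
      qed
      moreover have "base m \<in> seg m" "(\<lambda>k. base m k + col m k) \<in> seg m"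
        unfolding seg_def by (auto intro: mem_conv)
      ultimately show "pos_dim (seg m)" unfolding pos_dim_def by blast
    qed
    have PsOK: "\<forall>Q\<in>set Ps. lattice_polytope n Q \<and> pos_dim Q"
      using segok by (auto simp: Ps_def)
    define Q where "Q = msum_list Ps"
    have lQ: "lattice_polytope n Q" unfolding Q_def using PsOK by (intro lattice_msum_list) auto
    have QP: "Q \<subseteq> P"
    proof
      fix z assume "z \<in> Q"
      then obtain f where f: "\<forall>j<i. f j \<in> seg j" "z = (\<lambda>k. \<Sum>j<i. f j k)"
        unfolding Q_def msum_list_iff lenPs using Psj by auto
      have "\<forall>j. \<exists>\<theta>. j < i \<longrightarrow> 0 \<le> \<theta> \<and> \<theta> \<le> 1 \<and> f j = (\<lambda>k. base j k + \<theta> * col j k)"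
      proof
        fix j show "\<exists>\<theta>. j < i \<longrightarrow> 0 \<le> \<theta> \<and> \<theta> \<le> 1 \<and> f j = (\<lambda>k. base j k + \<theta> * col j k)"
        proof (cases "j < i")
          case True
          then obtain \<theta> where "0 \<le> \<theta>" "\<theta> \<le> 1" "f j = (\<lambda>k. base j k + \<theta> * ((base j k + col j k) - base j k))"
            using conv_pair f(1) unfolding seg_def by blast
          then show ?thesis by (intro exI[of _ \<theta>]) simp
        qed simp
      qed
      then obtain \<theta> where th: "\<forall>j<i. 0 \<le> \<theta> j \<and> \<theta> j \<le> 1 \<and> f j = (\<lambda>k. base j k + \<theta> j * col j k)"
        by (metis (no_types))
      define x where "x = (\<lambda>b. if b < i then \<theta> b else 0)"
      have xc: "x \<in> unit_cube i" using th by (auto simp: unit_cube_def x_def)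
      have "z = aff_map n M lam x"
      proof
        fix k
        have zk: "z k = (\<Sum>j<i. base j k) + (\<Sum>j<i. \<theta> j * col j k)"
          using f(2) th by (simp add: sum.distrib)
        have b: "(\<Sum>j<i. base j k) = real_of_int (lam k)"
        proof -
          have "(\<Sum>j<i. base j k) = (\<Sum>j<i. if j = 0 then real_of_int (lam k) else 0)"
            by (rule sum.cong) (auto simp: base_def)
          also have "\<dots> = real_of_int (lam k)" using False by (simp add: sum.delta')
          finally show ?thesis .
        qed
        show "z k = aff_map n M lam x k"
        proof (cases "k < n")
          case True
          have "(\<Sum>b<n. real_of_int (M k b) * x b) = (\<Sum>b<i. real_of_int (M k b) * x b)"
            using hML(1) by (intro sum.mono_neutral_right) (auto simp: x_def)
          also have "\<dots> = (\<Sum>j<i. \<theta> j * col j k)"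
            using True by (intro sum.cong) (auto simp: x_def col_def)
          finally show ?thesis using True zk b by (simp add: aff_map_def)
        next
          case False
          then show ?thesis using zk b hML(3) by (simp add: aff_map_def col_def)
        qed
      qed
      then show "z \<in> P" using hML(4) xc by blast
    qed
    have bQ: "box n c Q" using box_mono[OF bx QP] .
    have "mpred n Q i" unfolding mpred_def Q_def using lenPs PsOK by blast
    then have "i \<le> mink_length n Q" using mink_ge[OF bQ] by blast
    also have "\<dots> \<le> full_mink_length n P" by (rule full_ge[OF bx lQ QP])
    finally show ?thesis by (simp add: i_def)
  qed
qed

lemma uni_unimodular: "uni n U V \<Longrightarrow> unimodular n V"
  unfolding uni_def unimodular_def mmul_def idm_def by (intro exI[of _ U]) auto

lemma hard:
  assumes lp: "lattice_polytope n P" and bx: "box n c P"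
  shows "full_mink_length n P \<le> cube_number n P * (1 + (c+1)*c)"
proof (cases "full_mink_length n P = 0")
  case True then show ?thesis by simp
next
  case False
  define L where "L = full_mink_length n P"
  obtain Q where Q: "lattice_polytope n Q" "Q \<subseteq> P" "L = mink_length n Q"
    using full_pred[OF bx lp] unfolding fpred_def L_def by blast
  have bQ: "box n c Q" using box_mono[OF bx Q(2)] .
  obtain Ps where Ps: "length Ps = L" "\<forall>Q\<in>set Ps. lattice_polytope n Q \<and> pos_dim Q" "Q = msum_list Ps"
    using mink_pred[OF bQ] False unfolding mpred_def Q(3)[symmetric] L_def by auto
  obtain s t where st: "\<forall>j<L. s j \<in> Ps!j \<and> t j \<in> Ps!j \<and> in_lattice n (s j) \<and> in_lattice n (t j) \<and> s j \<noteq> t j"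
    "\<forall>k<n. (\<Sum>j<L. \<bar>t j k - s j k\<bar>) \<le> real c"
    using width[OF Ps(2)] bQ Ps(1,3) by blast
  define d where "d = (\<lambda>j k. \<lfloor>t j k\<rfloor> - \<lfloor>s j k\<rfloor>)"
  have dr: "real_of_int (d j k) = t j k - s j k" if "j < L" for j k
    using st(1) that by (auto simp: d_def in_lattice_def of_int_floor_Ints)
  have svs: "s j k = 0" "t j k = 0" if "j < L" "n \<le> k" for j k
    using st(1) that by (auto simp: in_lattice_def)
  have g1: "\<forall>j\<in>{..<L}. sv n (d j)" using svs by (auto simp: sv_def d_def)
  have g2: "\<forall>j\<in>{..<L}. \<exists>k. d j k \<noteq> 0"
  proof
    fix j assume "j \<in> {..<L}"
    then have j: "j < L" by simp
    then obtain k where "s j k \<noteq> t j k" using st(1) by (auto simp: fun_eq_iff)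
    then have "real_of_int (d j k) \<noteq> 0" using dr[OF j] by simp
    then show "\<exists>k. d j k \<noteq> 0" by auto
  qed
  have g3: "\<forall>j\<in>{..<L}. \<forall>k. \<bar>d j k\<bar> \<le> int c"
  proof (intro ballI allI)
    fix j k assume "j \<in> {..<L}"
    then have j: "j < L" by simp
    show "\<bar>d j k\<bar> \<le> int c"
    proof (cases "k < n")
      case True
      have "\<bar>t j k - s j k\<bar> \<le> (\<Sum>j<L. \<bar>t j k - s j k\<bar>)"
        using j by (intro member_le_sum) auto
      then have "\<bar>t j k - s j k\<bar> \<le> real c" using st(2) True by (meson order_trans)
      then have "real_of_int \<bar>d j k\<bar> \<le> real c" using dr[OF j] by simp
      then show ?thesis by linarith
    next
      case False then show ?thesis using g1 j by (simp add: sv_def)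
    qed
  qed
  have g4: "\<forall>k. card {j\<in>{..<L}. d j k \<noteq> 0} \<le> c"
  proof
    fix k
    show "card {j\<in>{..<L}. d j k \<noteq> 0} \<le> c"
    proof (cases "k < n")
      case True
      let ?A = "{j\<in>{..<L}. d j k \<noteq> 0}"
      have "real (card ?A) = (\<Sum>j\<in>?A. 1)" by simp
      also have "\<dots> \<le> (\<Sum>j\<in>?A. \<bar>t j k - s j k\<bar>)"
      proof (rule sum_mono)
        fix j assume j: "j \<in> ?A"
        then have "real_of_int (d j k) \<noteq> 0" by simp
        then have "1 \<le> \<bar>real_of_int (d j k)\<bar>" by (intro Ints_abs_ge1) auto
        then show "1 \<le> \<bar>t j k - s j k\<bar>" using dr j by simp
      qed
      also have "\<dots> \<le> (\<Sum>j<L. \<bar>t j k - s j k\<bar>)" by (intro sum_mono2) auto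
      also have "\<dots> \<le> real c" using st(2) True by simp
      finally show ?thesis by simp
    next
      case False
      then have "\<forall>j<L. d j k = 0" using g1 by (auto simp: sv_def)
      then have e: "{j\<in>{..<L}. d j k \<noteq> 0} = {}" by auto
      show ?thesis unfolding e by simp
    qed
  qed
  obtain i js g U V where gr: "i \<le> n" "card {..<L} \<le> i * (1 + (c+1)*c)" "uni n U V"
    "inj_on js {..<i}" "js ` {..<i} \<subseteq> {..<L}"
    "\<forall>m<i. g m > 0 \<and> mv n U (d (js m)) = (\<lambda>a. if a = m then g m else 0)"
    using greedy[OF g1 g2 g3 g4] by blast
  have colV: "real_of_int (d (js m) k) = real_of_int (V k m) * real_of_int (g m)" if "m < i" "k < n" for m k
  proof -
    have jL: "js m < L" using gr(5) that(1) by auto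
    have "d (js m) = mv n V (mv n U (d (js m)))" using uni_inv[OF gr(3)] g1 jL by simp
    also have "\<dots> = mv n V (\<lambda>a. if a = m then g m else 0)" using gr(6) that(1) by simp
    finally have "d (js m) k = (\<Sum>b<n. V k b * (if b = m then g m else 0))"
      using that(2) by (simp add: mv_def)
    also have "\<dots> = V k m * g m" using that gr(1) by (simp add: sum.delta')
    finally show ?thesis by simp
  qed
  define lam where "lam = (\<lambda>k. if k < n then (\<Sum>j<L. \<lfloor>s j k\<rfloor>) else 0)"
  define inv where "inv = the_inv_into {..<i} js"
  have cube: "aff_map n V lam ` unit_cube i \<subseteq> P"
  proof
    fix z assume "z \<in> aff_map n V lam ` unit_cube i"
    then obtain x where x: "x \<in> unit_cube i" "z = aff_map n V lam x" by blast
    define \<tau> where "\<tau> = (\<lambda>j. if j \<in> js ` {..<i} then x (inv j) / real_of_int (g (inv j)) else 0)"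
    have \<tau>01: "0 \<le> \<tau> j \<and> \<tau> j \<le> 1" for j
    proof (cases "j \<in> js ` {..<i}")
      case True
      then obtain m where m: "m < i" "j = js m" by auto
      have im: "inv j = m" using m gr(4) by (simp add: inv_def the_inv_into_f_f)
      have "0 \<le> x m" "x m \<le> 1" using x(1) m(1) by (auto simp: unit_cube_def)
      moreover have "1 \<le> real_of_int (g m)" using gr(6) m(1) by (simp add: int_one_le_iff_zero_less)
      ultimately show ?thesis using True im by (auto simp: \<tau>_def divide_le_eq_1)
    qed (simp add: \<tau>_def)
    define f where "f = (\<lambda>j k. (1 - \<tau> j) * s j k + \<tau> j * t j k)"
    have fin: "f j \<in> Ps ! j" if j: "j < L" for j
    proof -
      have "Ps ! j \<in> set Ps" using j Ps(1) by simp
      then have "lattice_polytope n (Ps ! j)" using Ps(2) by blast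
      then obtain S where "Ps ! j = conv_fin S" unfolding lattice_polytope_def by blast
      then show ?thesis using st(1) j \<tau>01[of j] conv_convex[of "s j" S "t j" "\<tau> j"]
        by (auto simp: f_def)
    qed
    have zf: "z = (\<lambda>k. \<Sum>j<L. f j k)"
    proof
      fix k
      show "z k = (\<Sum>j<L. f j k)"
      proof (cases "k < n")
        case False
        then have "\<forall>j<L. f j k = 0" using svs by (simp add: f_def)
        then show ?thesis using False x(2) by (simp add: aff_map_def)
      next
        case True
        have "(\<Sum>j<L. f j k) = (\<Sum>j<L. s j k) + (\<Sum>j<L. \<tau> j * (t j k - s j k))"
          by (simp add: f_def sum.distrib[symmetric] algebra_simps)
        moreover have "(\<Sum>j<L. s j k) = real_of_int (lam k)"
          using True st(1) by (simp add: lam_def in_lattice_def of_int_floor_Ints)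
        moreover have "(\<Sum>j<L. \<tau> j * (t j k - s j k)) = (\<Sum>b<n. real_of_int (V k b) * x b)"
        proof -
          have "(\<Sum>j<L. \<tau> j * (t j k - s j k)) = (\<Sum>j\<in>js ` {..<i}. \<tau> j * (t j k - s j k))"
            using gr(5) by (intro sum.mono_neutral_right) (auto simp: \<tau>_def)
          also have "\<dots> = (\<Sum>m<i. \<tau> (js m) * (t (js m) k - s (js m) k))"
            using gr(4) by (simp add: sum.reindex)
          also have "\<dots> = (\<Sum>m<i. real_of_int (V k m) * x m)"
          proof (rule sum.cong)
            fix m assume "m \<in> {..<i}"
            then have m: "m < i" by simp
            have jL: "js m < L" using gr(5) m by auto
            have im: "inv (js m) = m" using m gr(4) by (simp add: inv_def the_inv_into_f_f)
            have gp: "real_of_int (g m) > 0" using gr(6) m by simp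
            have "t (js m) k - s (js m) k = real_of_int (V k m) * real_of_int (g m)"
              using colV[OF m True] dr[OF jL] by simp
            then show "\<tau> (js m) * (t (js m) k - s (js m) k) = real_of_int (V k m) * x m"
              using m im gp by (simp add: \<tau>_def)
          qed simp
          also have "\<dots> = (\<Sum>b<n. real_of_int (V k b) * x b)"
            using gr(1) x(1) by (intro sum.mono_neutral_left) (auto simp: unit_cube_def)
          finally show ?thesis .
        qed
        ultimately show ?thesis using True x(2) by (simp add: aff_map_def)
      qed
    qed
    have "z \<in> msum_list Ps" unfolding zf using fin Ps(1) by (intro msum_list_iff[THEN iffD2] exI[of _ f]) auto
    then show "z \<in> P" using Ps(3) Q(2) by blast
  qed
  have "cpred n P i" unfolding cpred_def using gr(1) uni_unimodular[OF gr(3)] cube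
    by (intro conjI exI[of _ V] exI[of _ lam]) (auto simp: lam_def)
  then have "i \<le> cube_number n P" by (rule cube_ge)
  then have "i * (1 + (c+1)*c) \<le> cube_number n P * (1 + (c+1)*c)" by (rule mult_le_mono1)
  then show ?thesis using gr(2) by (simp add: L_def)
qed

lemma bdd_equiv:
  fixes f g :: "nat \<Rightarrow> nat"
  assumes "\<And>i. f i \<le> g i" "\<And>i. g i \<le> f i * B"
  shows "\<not> bdd_above (range f) \<longleftrightarrow> \<not> bdd_above (range g)"
proof
  assume nf: "\<not> bdd_above (range f)"
  show "\<not> bdd_above (range g)"
  proof
    assume "bdd_above (range g)"
    then obtain b where "\<forall>i. g i \<le> b" by (auto simp: bdd_above_def)
    then have "\<forall>i. f i \<le> b" using assms(1) le_trans by blast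
    then show False using nf by (auto simp: bdd_above_def)
  qed
next
  assume ng: "\<not> bdd_above (range g)"
  show "\<not> bdd_above (range f)"
  proof
    assume "bdd_above (range f)"
    then obtain b where "\<forall>i. f i \<le> b" by (auto simp: bdd_above_def)
    then have "\<forall>i. g i \<le> b * B" using assms(2) le_trans mult_le_mono1 by blast
    then show False using ng by (auto simp: bdd_above_def)
  qed
qed

theorem mainTheorem13:
  fixes q :: nat and n :: "nat \<Rightarrow> nat" and P :: "nat \<Rightarrow> (nat \<Rightarrow> real) set"
  assumes q: "\<exists>p k. prime p \<and> k \<ge> 1 \<and> q = p ^ k"
    and poly: "\<And>i. lattice_polytope (n i) (P i)"
    and box: "\<And>i x j. x \<in> P i \<Longrightarrow> j < n i \<Longrightarrow> 0 \<le> x j \<and> x j \<le> real q - 2"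
  shows "\<not> bdd_above (range (\<lambda>i. cube_number (n i) (P i))) \<longleftrightarrow>
         \<not> bdd_above (range (\<lambda>i. full_mink_length (n i) (P i)))"
proof -
  obtain p k where pk: "prime p" "k \<ge> 1" "q = p ^ k" using q by blast
  have "p \<ge> 2" using pk(1) by (rule prime_ge_2_nat)
  moreover have "p ^ 1 \<le> p ^ k" using pk(2) \<open>p \<ge> 2\<close> by (intro power_increasing) auto
  ultimately have q2: "q \<ge> 2" using pk(3) by simp
  have bx: "box (n i) (q - 2) (P i)" for i
    using box q2 by (auto simp: box_def of_nat_diff)
  show ?thesis
  proof (rule bdd_equiv[of _ _ "1 + (q - 2 + 1) * (q - 2)"])
    fix i
    show "cube_number (n i) (P i) \<le> full_mink_length (n i) (P i)" by (rule easy[OF poly bx])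
    show "full_mink_length (n i) (P i) \<le> cube_number (n i) (P i) * (1 + (q - 2 + 1) * (q - 2))"
      by (rule hard[OF poly bx])
  qed
qed

end
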